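(* Let $\Gamma\subseteq C^0(\mathbb{R})$ be a class such that for every compact $K\subset\mathbb{R}$, continuous $h:K\to\mathbb{R}$ and $\eta>0$ there is $\gamma\in\Gamma$ with $\sup_K|h-\gamma|<\eta$. Let $\mathcal{G}$ be a class of real functions that are continuously differentiable on an open set containing $[0,1]^d$, such that for every $R(\boldsymbol{x})=\sum_{i=1}^N\psi_i(\boldsymbol{a}_i^\top\boldsymbol{x}+b_i)$ with $\psi_i\in C^1(\mathbb{R})$ and every $\eta>0$ there is $G\in\mathcal{G}$ with $\sup_{[0,1]^d}\|\nabla R-\nabla G\|<\eta$. Let $F:[0,1]^d\to\mathbb{R}$ be of the form $F(\boldsymbol{x})=T\big(\sum_{i=1}^N\psi_i(\boldsymbol{a}_i^\top\boldsymbol{x}+b_i)\big)$ with $T,\psi_i\in C^1(\mathbb{R})$, $\boldsymbol{a}_i\in\mathbb{R}^d$, $b_i\in\mathbb{R}$. Then for every $\epsilon>0$ there exist $\gamma\in\Gamma$, $G\in\mathcal{G}$ and $\beta\in\mathbb{R}$ such that, with $h(\boldsymbol{x})=\gamma(G(\boldsymbol{x})+\beta)\,\nabla G(\boldsymbol{x})$, $$\sup_{\boldsymbol{x}\in[0,1]^d}\|\nabla F(\boldsymbol{x})-h(\boldsymbol{x})\|<\epsilon .$$ Moreover every function of the form $h=\gamma(G+\beta)\nabla G$ with $\gamma$ continuous and $G$ continuously differentiable is the gradient of a $C^1$ function on $[0,1]^d$ (namely $\tilde\Gamma(G+\beta)$ with $\tilde\Gamma'=\gamma$).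
   Context: $C^0(\mathbb{R})$, $C^1(\mathbb{R})$: continuous and continuously differentiable real functions on $\mathbb{R}$. $\|\cdot\|$ is the Euclidean norm. *)

theory Defs
  imports "HOL-Analysis.Analysis"
begin

definition grad :: "(real^'n \<Rightarrow> real) \<Rightarrow> real^'n \<Rightarrow> real^'n" where
  "grad f x = (\<chi> i. frechet_derivative f (at x) (axis i 1))"

definition C1_on :: "(real^'n) set \<Rightarrow> (real^'n \<Rightarrow> real) \<Rightarrow> bool" where
  "C1_on U f \<longleftrightarrow> (\<forall>x\<in>U. f differentiable (at x)) \<and> continuous_on U (grad f)"

abbreviation unit_cube :: "(real^'n) set" where
  "unit_cube \<equiv> cbox 0 1"

end

theory Submission
  imports Defs
begin



lemma grad_eq: "(f has_derivative f') (at x) \<Longrightarrow> grad f x = (\<chi> i. f' (axis i 1))"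
  unfolding grad_def by (simp add: frechet_derivative_at[symmetric])

lemma lin_dot:
  fixes L :: "real^'n \<Rightarrow> real"
  assumes "linear L" shows "L h = (\<chi> i. L (axis i 1)) \<bullet> h"
proof -
  have "L h = L (\<Sum>i\<in>UNIV. h $ i *s axis i 1)" by (simp add: basis_expansion)
  also have "\<dots> = (\<Sum>i\<in>UNIV. h $ i * L (axis i 1))"
    using assms by (simp add: linear_sum linear_cmul scalar_mult_eq_scaleR)
  also have "\<dots> = (\<chi> i. L (axis i 1)) \<bullet> h" by (simp add: inner_vec_def mult.commute)
  finally show ?thesis .
qed


lemma onorm_bound:
  fixes L :: "real^'n \<Rightarrow> real"
  assumes "linear L" shows "onorm L \<le> norm (\<chi> i. L (axis i 1))"
proof (rule onorm_le)
  fix x show "norm (L x) \<le> norm (\<chi> i. L (axis i 1)) * norm x"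
    using lin_dot[OF assms, of x] by (simp add: Cauchy_Schwarz_ineq2)
qed

lemma antider:
  fixes \<gamma> :: "real \<Rightarrow> real"
  assumes "continuous_on UNIV \<gamma>"
  shows "\<exists>\<Phi>. \<forall>t. (\<Phi> has_real_derivative \<gamma> t) (at t)"
proof -
  have "\<exists>F. \<forall>x :: real. (-\<infinity>::ereal) < x \<longrightarrow> x < (\<infinity>::ereal) \<longrightarrow> (F has_vector_derivative \<gamma> x) (at x)"
    by (rule einterval_antiderivative) (use assms in \<open>auto simp: continuous_on_eq_continuous_at\<close>)
  then show ?thesis by (auto simp: has_real_derivative_iff_has_vector_derivative)
qed

lemma ridge_deriv:
  fixes a :: "real^'n"
  assumes "(\<psi> has_real_derivative d) (at (a \<bullet> x + b))"
  shows "((\<lambda>y. \<psi> (a \<bullet> y + b)) has_derivative (\<lambda>h. d * (a \<bullet> h))) (at x)"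
proof -
  have "((\<lambda>y. a \<bullet> y + b) has_derivative (\<lambda>h. a \<bullet> h)) (at x)"
    by (auto intro!: derivative_eq_intros)
  from has_derivative_compose[OF this assms[unfolded has_field_derivative_def]]
  show ?thesis by simp
qed


theorem theorem5:
  fixes \<Gamma> :: "(real \<Rightarrow> real) set"
    and \<G> :: "(real^'n \<Rightarrow> real) set"
    and T :: "real \<Rightarrow> real"
    and N :: nat
    and \<psi> :: "nat \<Rightarrow> real \<Rightarrow> real"
    and a :: "nat \<Rightarrow> real^'n"
    and b :: "nat \<Rightarrow> real"
    and F :: "real^'n \<Rightarrow> real"
  assumes \<Gamma>_cont: "\<forall>\<gamma>\<in>\<Gamma>. continuous_on UNIV \<gamma>"
    and \<Gamma>_dense: "\<And>K h \<eta>. compact K \<Longrightarrow> continuous_on K h \<Longrightarrow> \<eta> > 0 \<Longrightarrow>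
                   \<exists>\<gamma>\<in>\<Gamma>. \<forall>t\<in>K. \<bar>h t - \<gamma> t\<bar> < \<eta>"
    and \<G>_C1: "\<forall>G\<in>\<G>. \<exists>U. open U \<and> unit_cube \<subseteq> U \<and> C1_on U G"
    and \<G>_dense: "\<And>M (\<phi>::nat \<Rightarrow> real \<Rightarrow> real) (c::nat \<Rightarrow> real^'n) (e::nat \<Rightarrow> real) \<eta>.
                   (\<forall>i\<in>{1..M}. \<phi> i C1_differentiable_on UNIV) \<Longrightarrow> \<eta> > 0 \<Longrightarrow>
                   \<exists>G\<in>\<G>. \<forall>x\<in>unit_cube.
                     norm (grad (\<lambda>y. \<Sum>i=1..M. \<phi> i (c i \<bullet> y + e i)) x - grad G x) < \<eta>"
    and T_C1: "T C1_differentiable_on UNIV"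
    and \<psi>_C1: "\<forall>i\<in>{1..N}. \<psi> i C1_differentiable_on UNIV"
    and F_def: "F = (\<lambda>x. T (\<Sum>i=1..N. \<psi> i (a i \<bullet> x + b i)))"
  shows "(\<forall>\<epsilon>>0. \<exists>\<gamma>\<in>\<Gamma>. \<exists>G\<in>\<G>. \<exists>\<beta>::real.
            (SUP x\<in>unit_cube. norm (grad F x - \<gamma> (G x + \<beta>) *\<^sub>R grad G x)) < \<epsilon>)
       \<and> (\<forall>(\<gamma>::real \<Rightarrow> real) (G::real^'n \<Rightarrow> real) (\<beta>::real) U.
            continuous_on UNIV \<gamma> \<longrightarrow> open U \<longrightarrow> unit_cube \<subseteq> U \<longrightarrow> C1_on U G \<longrightarrow>
            (\<exists>\<Phi>::real \<Rightarrow> real. (\<forall>t. (\<Phi> has_real_derivative \<gamma> t) (at t))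
               \<and> C1_on U (\<lambda>x. \<Phi> (G x + \<beta>))
               \<and> (\<forall>x\<in>unit_cube. grad (\<lambda>x. \<Phi> (G x + \<beta>)) x = \<gamma> (G x + \<beta>) *\<^sub>R grad G x)))"
proof -
  let ?S = "unit_cube :: (real^'n) set"
  have S0: "(0::real^'n) \<in> ?S" by (simp add: mem_box_cart)
  have part2: "\<forall>(\<gamma>::real \<Rightarrow> real) (G::real^'n \<Rightarrow> real) (\<beta>::real) U.
            continuous_on UNIV \<gamma> \<longrightarrow> open U \<longrightarrow> unit_cube \<subseteq> U \<longrightarrow> C1_on U G \<longrightarrow>
            (\<exists>\<Phi>::real \<Rightarrow> real. (\<forall>t. (\<Phi> has_real_derivative \<gamma> t) (at t))
               \<and> C1_on U (\<lambda>x. \<Phi> (G x + \<beta>))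
               \<and> (\<forall>x\<in>unit_cube. grad (\<lambda>x. \<Phi> (G x + \<beta>)) x = \<gamma> (G x + \<beta>) *\<^sub>R grad G x))"
  proof (intro allI impI)
    fix \<gamma> :: "real\<Rightarrow>real" and G :: "real^'n \<Rightarrow> real" and \<beta> :: real and U :: "(real^'n) set"
    assume \<gamma>c: "continuous_on UNIV \<gamma>" and U: "open U" "?S \<subseteq> U" and G: "C1_on U G"
    obtain \<Phi> where \<Phi>: "\<forall>t. (\<Phi> has_real_derivative \<gamma> t) (at t)" using antider[OF \<gamma>c] by blast
    have Gd: "(G has_derivative frechet_derivative G (at x)) (at x)" if "x\<in>U" for x
      using G that by (simp add: C1_on_def frechet_derivative_works)
    have Hd: "((\<lambda>x. \<Phi> (G x + \<beta>)) has_derivative (\<lambda>h. \<gamma> (G x + \<beta>) * frechet_derivative G (at x) h)) (at x)"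
      if "x\<in>U" for x
    proof -
      have "((\<lambda>x. G x + \<beta>) has_derivative frechet_derivative G (at x)) (at x)"
        using Gd[OF that] by (auto intro!: derivative_eq_intros)
      from has_derivative_compose[OF this \<Phi>[rule_format, of "G x + \<beta>", unfolded has_field_derivative_def]]
      show ?thesis by simp
    qed
    have gradH: "grad (\<lambda>x. \<Phi> (G x + \<beta>)) x = \<gamma> (G x + \<beta>) *\<^sub>R grad G x" if "x\<in>U" for x
      using grad_eq[OF Hd[OF that]] grad_eq[OF Gd[OF that]] by (simp add: vec_eq_iff)
    have contG: "continuous_on U G"
      using G unfolding C1_on_def by (intro continuous_at_imp_continuous_on) (blast intro: differentiable_imp_continuous_within)
    have c1: "continuous_on U (\<lambda>x. \<gamma> (G x + \<beta>))"
      by (rule continuous_on_compose2[OF \<gamma>c]) (auto intro!: continuous_intros contG)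
    have "continuous_on U (\<lambda>x. \<gamma> (G x + \<beta>) *\<^sub>R grad G x)"
      using c1 G by (auto simp: C1_on_def intro!: continuous_on_scaleR)
    then have "continuous_on U (grad (\<lambda>x. \<Phi> (G x + \<beta>)))"
      by (rule continuous_on_eq) (use gradH in auto)
    moreover have "\<forall>x\<in>U. (\<lambda>x. \<Phi> (G x + \<beta>)) differentiable (at x)"
      using Hd by (auto intro: differentiableI)
    ultimately show "\<exists>\<Phi>::real \<Rightarrow> real. (\<forall>t. (\<Phi> has_real_derivative \<gamma> t) (at t))
               \<and> C1_on U (\<lambda>x. \<Phi> (G x + \<beta>))
               \<and> (\<forall>x\<in>unit_cube. grad (\<lambda>x. \<Phi> (G x + \<beta>)) x = \<gamma> (G x + \<beta>) *\<^sub>R grad G x)"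
      using \<Phi> gradH U by (auto simp: C1_on_def intro!: exI[of _ \<Phi>])
  qed
  obtain DT where DT: "\<forall>x. (T has_vector_derivative DT x) (at x)" "continuous_on UNIV DT"
    using T_C1 unfolding C1_differentiable_on_def by auto
  have "\<forall>i\<in>{1..N}. \<exists>D. (\<forall>x. (\<psi> i has_vector_derivative D x) (at x)) \<and> continuous_on UNIV D"
    using \<psi>_C1 by (simp add: C1_differentiable_on_def)
  then obtain D\<psi> where D\<psi>: "\<forall>i\<in>{1..N}. (\<forall>x. (\<psi> i has_vector_derivative D\<psi> i x) (at x)) \<and> continuous_on UNIV (D\<psi> i)"
    by (metis bchoice)
  define R where "R = (\<lambda>y. \<Sum>i=1..N. \<psi> i (a i \<bullet> y + b i))"
  define R' where "R' x h = (\<Sum>i=1..N. D\<psi> i (a i \<bullet> x + b i) * (a i \<bullet> h))" for x h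
  have Rd: "(R has_derivative R' x) (at x)" for x
    unfolding R_def R'_def
    apply (rule has_derivative_sum)
    apply (rule ridge_deriv)
    using D\<psi> by (simp add: has_real_derivative_iff_has_vector_derivative)
  have gradR: "grad R x = (\<Sum>i=1..N. D\<psi> i (a i \<bullet> x + b i) *\<^sub>R a i)" for x
    using grad_eq[OF Rd] by (simp add: R'_def vec_eq_iff inner_axis sum_component)
  have contgR: "continuous_on UNIV (grad R)"
  proof -
    have "grad R = (\<lambda>x. \<Sum>i=1..N. D\<psi> i (a i \<bullet> x + b i) *\<^sub>R a i)" using gradR by auto
    moreover have "continuous_on UNIV (\<lambda>x. \<Sum>i=1..N. D\<psi> i (a i \<bullet> x + b i) *\<^sub>R a i)"
    proof (rule continuous_on_sum)
      fix i assume i: "i \<in> {1..N}"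
      have "continuous_on UNIV (\<lambda>x. D\<psi> i (a i \<bullet> x + b i))"
        apply (rule continuous_on_compose2[of UNIV "D\<psi> i"])
        using D\<psi> i apply blast
         apply (rule continuous_on_add[OF continuous_on_inner[OF continuous_on_const continuous_on_id] continuous_on_const])
        by simp
      then show "continuous_on UNIV (\<lambda>x. D\<psi> i (a i \<bullet> x + b i) *\<^sub>R a i)"
        by (rule continuous_on_scaleR) (rule continuous_on_const)
    qed
    ultimately show ?thesis by simp
  qed
  have Fd: "(F has_derivative (\<lambda>h. DT (R x) * R' x h)) (at x)" for x
  proof -
    have "(T has_real_derivative DT (R x)) (at (R x))"
      using DT by (simp add: has_real_derivative_iff_has_vector_derivative)
    from has_derivative_compose[OF Rd this[unfolded has_field_derivative_def]]
    show ?thesis by (simp add: F_def R_def)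
  qed
  have gradF: "grad F x = DT (R x) *\<^sub>R grad R x" for x
    using grad_eq[OF Fd] grad_eq[OF Rd] by (simp add: vec_eq_iff)
  have contR: "continuous_on UNIV R"
    using Rd by (intro continuous_at_imp_continuous_on) (blast intro: has_derivative_continuous)
  have cS: "compact ?S" "convex ?S" by (simp_all add: convex_box)
  obtain C where C: "\<forall>x\<in>?S. \<bar>R x\<bar> \<le> C"
  proof -
    have "compact (R ` ?S)" by (rule compact_continuous_image[OF continuous_on_subset[OF contR] cS(1)]) auto
    then obtain C where "\<forall>y\<in>R ` ?S. norm y \<le> C" using compact_imp_bounded bounded_iff by blast
    then show ?thesis using that by auto
  qed
  obtain B where B: "\<forall>x\<in>?S. norm (grad R x) \<le> B"
  proof -
    have "compact (grad R ` ?S)" by (rule compact_continuous_image[OF continuous_on_subset[OF contgR] cS(1)]) auto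
    then obtain B where "\<forall>y\<in>grad R ` ?S. norm y \<le> B" using compact_imp_bounded bounded_iff by blast
    then show ?thesis using that by auto
  qed
  obtain D0 where D0: "\<forall>x\<in>?S. norm x \<le> D0"
    using bounded_cbox bounded_iff by blast
  define D1 where "D1 = D0 + 1"
  have D1: "D1 > 0" "\<forall>x\<in>?S. norm x \<le> D1" using D0 S0 unfolding D1_def by force+
  have B0: "B \<ge> 0" using B S0 by (meson norm_ge_zero order_trans)
  have C0: "C \<ge> 0" using C S0 by (meson abs_ge_zero order_trans)
  define K where "K = {-(C+1)..C+1}"
  have cK: "compact K" by (simp add: K_def)
  have contK: "continuous_on K DT" using DT(2) continuous_on_subset by blast
  obtain L where L: "\<forall>t\<in>K. \<bar>DT t\<bar> \<le> L"
  proof -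
    have "compact (DT ` K)" by (rule compact_continuous_image[OF contK cK])
    then obtain L where "\<forall>y\<in>DT ` K. norm y \<le> L" using compact_imp_bounded bounded_iff by blast
    then show ?thesis using that by auto
  qed
  have "0 \<in> K" using C0 by (simp add: K_def)
  then have L0: "L \<ge> 0" using L by (meson abs_ge_zero order_trans)
  have uc: "uniformly_continuous_on K DT" by (rule compact_uniformly_continuous[OF contK cK])
  have RK: "R x \<in> K" if "x \<in> ?S" for x using C that by (auto simp: K_def abs_le_iff)
  have part1: "\<forall>\<epsilon>>0. \<exists>\<gamma>\<in>\<Gamma>. \<exists>G\<in>\<G>. \<exists>\<beta>::real.
            (SUP x\<in>unit_cube. norm (grad F x - \<gamma> (G x + \<beta>) *\<^sub>R grad G x)) < \<epsilon>"
  proof (intro allI impI)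
    fix \<epsilon> :: real assume \<epsilon>: "\<epsilon> > 0"
    define e1 where "e1 = \<epsilon> / (4 * (B + 1))"
    have Bp: "B + 1 > 0" using B0 by simp
    have e1: "e1 > 0" "e1 * (B + 1) = \<epsilon> / 4"
      using \<epsilon> Bp unfolding e1_def by (simp_all add: field_simps)
    obtain \<delta> where \<delta>: "\<delta> > 0" "\<forall>s\<in>K. \<forall>t\<in>K. dist t s < \<delta> \<longrightarrow> dist (DT t) (DT s) < e1"
      using uc e1(1) unfolding uniformly_continuous_on_def by blast
    define \<eta> where "\<eta> = min 1 (min (1/D1) (min (\<delta>/(2*D1)) (\<epsilon>/(4*(L+1)))))"
    have \<eta>: "\<eta> > 0" "\<eta> \<le> 1" "\<eta> * D1 \<le> 1" "\<eta> * D1 \<le> \<delta>/2" "L * \<eta> \<le> \<epsilon>/4"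
    proof -
      show "\<eta> > 0" using D1 \<delta> \<epsilon> L0 by (simp add: \<eta>_def)
      show "\<eta> \<le> 1" by (simp add: \<eta>_def)
      have "\<eta> \<le> 1/D1" by (simp add: \<eta>_def)
      then show "\<eta> * D1 \<le> 1" using D1 by (simp add: pos_le_divide_eq)
      have "\<eta> \<le> \<delta>/(2*D1)" by (simp add: \<eta>_def)
      then show "\<eta> * D1 \<le> \<delta>/2" using D1 by (simp add: pos_le_divide_eq field_simps)
      have "\<eta> \<le> \<epsilon>/(4*(L+1))" by (simp add: \<eta>_def)
      then have "L * \<eta> \<le> L * (\<epsilon>/(4*(L+1)))" using L0 by (rule mult_left_mono)
      also have "\<dots> \<le> (L+1) * (\<epsilon>/(4*(L+1)))" using L0 \<epsilon> by (intro mult_right_mono) auto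
      also have "\<dots> = \<epsilon>/4" using L0 by (simp add: field_simps)
      finally show "L * \<eta> \<le> \<epsilon>/4" .
    qed
    obtain G where G: "G \<in> \<G>" and Gapp: "\<forall>x\<in>?S. norm (grad R x - grad G x) < \<eta>"
      using \<G>_dense[of N \<psi> \<eta> a b] \<psi>_C1 \<eta>(1) unfolding R_def by blast
    obtain U where U: "open U" "?S \<subseteq> U" "C1_on U G" using \<G>_C1 G by blast
    have Gd: "(G has_derivative frechet_derivative G (at x)) (at x)" if "x\<in>?S" for x
      using U that by (auto simp: C1_on_def frechet_derivative_works)
    define \<beta> where "\<beta> = R 0 - G 0"
    have close: "\<bar>G x + \<beta> - R x\<bar> \<le> \<eta> * D1" if x: "x \<in> ?S" for x
    proof -
      have "norm ((\<lambda>y. G y - R y) x - (\<lambda>y. G y - R y) 0) \<le> \<eta> * norm (x - 0)"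
      proof (rule differentiable_bound[where f' = "\<lambda>y h. frechet_derivative G (at y) h - R' y h", OF cS(2) _ _ x S0])
        fix y assume y: "y \<in> ?S"
        show "((\<lambda>y. G y - R y) has_derivative (\<lambda>h. frechet_derivative G (at y) h - R' y h)) (at y within ?S)"
          by (rule has_derivative_at_withinI, rule has_derivative_diff[OF Gd[OF y] Rd])
        have lin: "linear (\<lambda>h. frechet_derivative G (at y) h - R' y h)"
          using has_derivative_diff[OF Gd[OF y] Rd] has_derivative_linear by blast
        have "(\<chi> i. frechet_derivative G (at y) (axis i 1) - R' y (axis i 1)) = grad G y - grad R y"
          using grad_eq[OF Gd[OF y]] grad_eq[OF Rd] by (simp add: vec_eq_iff)
        then have "onorm (\<lambda>h. frechet_derivative G (at y) h - R' y h) \<le> norm (grad G y - grad R y)"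
          using onorm_bound[OF lin] by simp
        also have "\<dots> \<le> \<eta>" using Gapp y by (simp add: norm_minus_commute less_imp_le)
        finally show "onorm (\<lambda>h. frechet_derivative G (at y) h - R' y h) \<le> \<eta>" .
      qed
      then have "\<bar>G x + \<beta> - R x\<bar> \<le> \<eta> * norm x" by (simp add: \<beta>_def algebra_simps)
      also have "\<dots> \<le> \<eta> * D1" using D1 x \<eta>(1) by (simp add: mult_left_mono)
      finally show ?thesis .
    qed
    have GK: "G x + \<beta> \<in> K" "\<bar>G x + \<beta> - R x\<bar> < \<delta>" if "x \<in> ?S" for x
    proof -
      show "\<bar>G x + \<beta> - R x\<bar> < \<delta>" using close[OF that] \<eta>(4) \<delta>(1) by linarith
      show "G x + \<beta> \<in> K" using close[OF that] \<eta>(3) C that by (auto simp: K_def abs_le_iff)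
    qed
    obtain \<gamma> where \<gamma>: "\<gamma> \<in> \<Gamma>" "\<forall>t\<in>K. \<bar>DT t - \<gamma> t\<bar> < e1"
      using \<Gamma>_dense[OF cK contK e1(1)] by blast
    have bnd: "norm (grad F x - \<gamma> (G x + \<beta>) *\<^sub>R grad G x) \<le> 3 * \<epsilon> / 4" if x: "x \<in> ?S" for x
    proof -
      define gR where "gR = grad R x"
      define gG where "gG = grad G x"
      define t where "t = G x + \<beta>"
      have ngG: "norm gG \<le> B + 1"
      proof -
        have "norm gG \<le> norm gR + norm (gR - gG)" using norm_triangle_sub[of gG gR] by (simp add: norm_minus_commute)
        then show ?thesis using B Gapp x \<eta>(2) unfolding gR_def gG_def by fastforce
      qed
      have eq: "grad F x - \<gamma> t *\<^sub>R gG = DT (R x) *\<^sub>R (gR - gG) + (DT (R x) - DT t) *\<^sub>R gG + (DT t - \<gamma> t) *\<^sub>R gG"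
        unfolding gradF gR_def by (simp add: algebra_simps)
      have t1: "norm (DT (R x) *\<^sub>R (gR - gG)) \<le> \<epsilon>/4"
      proof -
        have "norm (DT (R x) *\<^sub>R (gR - gG)) = \<bar>DT (R x)\<bar> * norm (gR - gG)" by simp
        also have "\<dots> \<le> L * \<eta>"
          using L RK[OF x] Gapp x unfolding gR_def gG_def
          by (intro mult_mono) (auto intro: less_imp_le L0)
        finally show ?thesis using \<eta>(5) by linarith
      qed
      have t2: "norm ((DT (R x) - DT t) *\<^sub>R gG) \<le> \<epsilon>/4"
      proof -
        have "dist (DT t) (DT (R x)) < e1"
          using \<delta>(2) RK[OF x] GK[OF x] unfolding t_def dist_real_def by blast
        then have "\<bar>DT (R x) - DT t\<bar> < e1" by (simp add: dist_real_def abs_minus_commute)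
        then have "\<bar>DT (R x) - DT t\<bar> * norm gG \<le> e1 * (B + 1)"
          using ngG by (intro mult_mono) auto
        then show ?thesis using e1(2) by simp
      qed
      have t3: "norm ((DT t - \<gamma> t) *\<^sub>R gG) \<le> \<epsilon>/4"
      proof -
        have "\<bar>DT t - \<gamma> t\<bar> < e1" using \<gamma>(2) GK[OF x] unfolding t_def by blast
        then have "\<bar>DT t - \<gamma> t\<bar> * norm gG \<le> e1 * (B + 1)"
          using ngG by (intro mult_mono) auto
        then show ?thesis using e1(2) by simp
      qed
      have "norm (grad F x - \<gamma> t *\<^sub>R gG) \<le> \<epsilon>/4 + \<epsilon>/4 + \<epsilon>/4"
        unfolding eq using t1 t2 t3 norm_triangle_ineq[of "DT (R x) *\<^sub>R (gR - gG) + (DT (R x) - DT t) *\<^sub>R gG" "(DT t - \<gamma> t) *\<^sub>R gG"]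
          norm_triangle_ineq[of "DT (R x) *\<^sub>R (gR - gG)" "(DT (R x) - DT t) *\<^sub>R gG"] by linarith
      then show ?thesis unfolding t_def gG_def by simp
    qed
    have "(SUP x\<in>unit_cube. norm (grad F x - \<gamma> (G x + \<beta>) *\<^sub>R grad G x)) \<le> 3 * \<epsilon> / 4"
      by (rule cSUP_least) (use S0 bnd in auto)
    also have "\<dots> < \<epsilon>" using \<epsilon> by simp
    finally show "\<exists>\<gamma>\<in>\<Gamma>. \<exists>G\<in>\<G>. \<exists>\<beta>::real.
            (SUP x\<in>unit_cube. norm (grad F x - \<gamma> (G x + \<beta>) *\<^sub>R grad G x)) < \<epsilon>"
      using \<gamma>(1) G by blast
  qed
  show ?thesis using part1 part2 by blast
qed

end
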